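(* For $\epsilon\in[0,1)$ define sequences $\{p_j(\epsilon)\}_{j\in\mathbb N}$ and $\{p'_j(\epsilon)\}_{j\in\mathbb N}$ by $p_1(\epsilon)=2+\epsilon$, $p'_1(\epsilon)=1+\epsilon$, $p_{j+1}(\epsilon)=2+\epsilon-1/p_j(\epsilon)$, $p'_{j+1}(\epsilon)=2+\epsilon-1/p'_j(\epsilon)$, and let $p_+(\epsilon)=1+\epsilon/2+\sqrt{\epsilon+\epsilon^2/4}$. For $l\in\mathbb N$ let $M(l)$ be the $l\times l$ matrix with entries $2\delta_{i_1i_2}-1_{\{|i_1-i_2|=1\}}$ and $I_l$ the identity. Then: 1. $1\le p'_j(\epsilon)\le p_+(\epsilon)<p_j(\epsilon)\le1+1/j+j\epsilon$ for all $j\in\mathbb N$; $\{p_j(\epsilon)\}_j$ is monotone decreasing and $\{p'_j(\epsilon)\}_j$ is monotone nondecreasing. 2. For every $l\in\mathbb N$, the sequence $\{((\epsilon I_l+M(l))^{-1})_{kk}\}_{k=1}^{[l/2]}$ is monotone increasing. 3. For $j\ge2$, $p_j(\epsilon)-p_+(\epsilon)\le(1+\sqrt\epsilon)^{-(j-2)}$ and $p_+(\epsilon)-p'_j(\epsilon)\le\sqrt\epsilon(1+\sqrt\epsilon)^{-(j-2)}$. 4. For every $k\ge2$, $\prod_{j=1}^kp'_j(\epsilon)=(p_k(\epsilon)-1)\prod_{j=1}^{k-1}p_j(\epsilon)$. *)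

theory Defs
  imports Complex_Main "Jordan_Normal_Form.Gauss_Jordan_Elimination"
begin

text \<open>The sequences p_j and p'_j, indexed from j = 1 as in the paper
  (the value at index 0 is an unused dummy).\<close>
fun pseq :: "real \<Rightarrow> nat \<Rightarrow> real" where
  "pseq e 0 = 0"
| "pseq e (Suc 0) = 2 + e"
| "pseq e (Suc (Suc n)) = 2 + e - 1 / pseq e (Suc n)"

fun pseq' :: "real \<Rightarrow> nat \<Rightarrow> real" where
  "pseq' e 0 = 0"
| "pseq' e (Suc 0) = 1 + e"
| "pseq' e (Suc (Suc n)) = 2 + e - 1 / pseq' e (Suc n)"

definition pplus :: "real \<Rightarrow> real" where
  "pplus e = 1 + e / 2 + sqrt (e + e^2 / 4)"

text \<open>M(l): l x l matrix with entries 2 delta_{ij} - 1_{|i-j|=1}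
  (JNF matrices are 0-indexed).\<close>
definition Mmat :: "nat \<Rightarrow> real mat" where
  "Mmat l = mat l l (\<lambda>(i, j). (if i = j then 2 else 0) - (if i = j + 1 \<or> j = i + 1 then 1 else 0))"

definition Ginv :: "real \<Rightarrow> nat \<Rightarrow> real mat" where
  "Ginv e l = the (mat_inverse (e \<cdot>\<^sub>m 1\<^sub>m l + Mmat l))"

end

theory Submission
  imports Defs "Jordan_Normal_Form.Determinant"
begin


fun Tc :: "real \<Rightarrow> nat \<Rightarrow> real" where
  "Tc a 0 = 0"
| "Tc a (Suc 0) = 1"
| "Tc a (Suc (Suc n)) = a * Tc a (Suc n) - Tc a n"

lemma Tc_grow: assumes "a \<ge> 2" shows "Tc a (Suc n) - Tc a n \<ge> 1 \<and> Tc a n \<ge> real n"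
proof (induction n rule: nat_less_induct)
  case (1 n)
  show ?case
  proof (cases n)
    case 0 then show ?thesis by simp
  next
    case (Suc m)
    then have IH: "Tc a (Suc m) - Tc a m \<ge> 1" "Tc a m \<ge> real m" using 1 by auto
    have "Tc a (Suc (Suc m)) - Tc a (Suc m) = (a - 2) * Tc a (Suc m) + (Tc a (Suc m) - Tc a m)" by (simp add: algebra_simps)
    moreover have "(a - 2) * Tc a (Suc m) \<ge> 0" using assms IH by (simp add: mult_nonneg_nonneg)
    ultimately show ?thesis using IH Suc by simp
  qed
qed

lemma Tc_pos: "a \<ge> 2 \<Longrightarrow> 0 < n \<Longrightarrow> Tc a n > 0"
  using Tc_grow[of a n] by linarith

lemma Tc_add: "Tc a (m + n + 1) = Tc a (m+1) * Tc a (n+1) - Tc a m * Tc a n"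
proof (induction m arbitrary: n)
  case 0 then show ?case by simp
next
  case (Suc m)
  have "Tc a (Suc m + n + 1) = Tc a (m + (n+1) + 1)" by simp
  also have "\<dots> = Tc a (m+1) * Tc a (n+2) - Tc a m * Tc a (n+1)" using Suc[of "n+1"] by simp
  also have "\<dots> = Tc a (m+2) * Tc a (n+1) - Tc a (m+1) * Tc a n"
    by (simp add: algebra_simps)
  finally show ?case by simp
qed

lemma Tc_cheb: "Tc a (k+1) * Tc a (n+k) - Tc a k * Tc a (n+k+1) = Tc a n"
proof (induction k)
  case 0 then show ?case by simp
next
  case (Suc k)
  have "Tc a (Suc k + 1) * Tc a (n + Suc k) - Tc a (Suc k) * Tc a (n + Suc k + 1)
     = Tc a (k+1) * Tc a (n+k) - Tc a k * Tc a (n+k+1)"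
    by (simp add: algebra_simps)
  then show ?case using Suc by simp
qed




lemma tri_sum:
  fixes f :: "nat \<Rightarrow> real"
  assumes "i < l"
  shows "(\<Sum>k\<in>{0..<l}. ((if i = k then c else 0) - (if i = k+1 \<or> k = i+1 then 1 else 0)) * f k)
    = c * f i - (if 0 < i then f (i-1) else 0) - (if i+1 < l then f (i+1) else 0)"
proof -
  have eq: "\<And>k. ((if i = k then c else 0) - (if i = k+1 \<or> k = i+1 then 1 else 0)) * f k
     = (if k = i then c * f k else 0) - (if k = i - 1 \<and> 0 < i then f k else 0) - (if k = i+1 then f k else 0)"
    by auto
  have s1: "(\<Sum>k\<in>{0..<l}. (if k = i then c * f k else 0)) = c * f i" using assms by simp
  have s2: "(\<Sum>k\<in>{0..<l}. (if k = i - 1 \<and> 0 < i then f k else 0)) = (if 0 < i then f (i-1) else 0)"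
    using assms by (cases "0 < i") auto
  have s3: "(\<Sum>k\<in>{0..<l}. (if k = i + 1 then f k else 0)) = (if i+1 < l then f (i+1) else 0)"
    by simp
  show ?thesis unfolding eq sum_subtractf s1 s2 s3 ..
qed

definition Bm :: "real \<Rightarrow> nat \<Rightarrow> real mat" where
  "Bm e l = mat l l (\<lambda>(i,j). Tc (2+e) (min i j + 1) * Tc (2+e) (l - max i j) / Tc (2+e) (l+1))"

definition Am :: "real \<Rightarrow> nat \<Rightarrow> real mat" where
  "Am e l = e \<cdot>\<^sub>m 1\<^sub>m l + Mmat l"

lemma Am_carrier: "Am e l \<in> carrier_mat l l" by (simp add: Am_def Mmat_def)
lemma Bm_carrier: "Bm e l \<in> carrier_mat l l" by (simp add: Bm_def)

lemma Am_idx: "i < l \<Longrightarrow> k < l \<Longrightarrow> Am e l $$ (i,k) =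
   (if i = k then 2+e else 0) - (if i = k+1 \<or> k = i+1 then 1 else 0)"
  by (auto simp: Am_def Mmat_def)

lemma AB: assumes e: "0 \<le> e" shows "Am e l * Bm e l = 1\<^sub>m l"
proof (rule eq_matI)
  show "dim_row (Am e l * Bm e l) = dim_row (1\<^sub>m l)" by (simp add: Am_def Mmat_def)
  show "dim_col (Am e l * Bm e l) = dim_col (1\<^sub>m l)" by (simp add: Bm_def)
  fix i j assume i: "i < dim_row (1\<^sub>m l)" and j: "j < dim_col (1\<^sub>m l)"
  hence i: "i < l" and j: "j < l" by auto
  let ?T = "Tc (2+e)"
  define b where "b k = ?T (min k j + 1) * ?T (l - max k j) / ?T (l+1)" for k
  have pos: "?T (l+1) > 0" using Tc_pos[of "2+e" "l+1"] e by simp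
  have "(Am e l * Bm e l) $$ (i,j) = (\<Sum>k\<in>{0..<l}. Am e l $$ (i,k) * Bm e l $$ (k,j))"
    using i j Am_carrier[of e l] Bm_carrier[of e l]
    by (auto simp: scalar_prod_def Am_def Mmat_def Bm_def intro!: sum.cong)
  also have "\<dots> = (\<Sum>k\<in>{0..<l}. ((if i = k then 2+e else 0) - (if i = k+1 \<or> k = i+1 then 1 else 0)) * b k)"
    by (rule sum.cong) (auto simp: Am_idx i j Bm_def b_def)
  also have "\<dots> = (2+e) * b i - (if 0 < i then b (i-1) else 0) - (if i+1 < l then b (i+1) else 0)"
    by (rule tri_sum[OF i])
  also have "\<dots> = 1\<^sub>m l $$ (i,j)"
  proof (cases i j rule: linorder_cases)
    case less
    define c where "c = ?T (l - j) / ?T (l+1)"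
    have bk: "\<And>k. k \<le> j \<Longrightarrow> b k = ?T (k+1) * c" by (simp add: b_def c_def)
    have b1: "(if 0 < i then b (i-1) else 0) = ?T i * c" using less by (cases i) (auto simp: bk)
    have b2: "(if i+1 < l then b (i+1) else 0) = ?T (i+2) * c" using less j by (simp add: bk)
    have rec: "?T (i+2) = (2+e) * ?T (i+1) - ?T i" by simp
    have "(2+e) * b i - (if 0 < i then b (i-1) else 0) - (if i+1 < l then b (i+1) else 0)
       = ((2+e) * ?T (i+1) - ?T i - ?T (i+2)) * c"
      unfolding b1 b2 using less by (simp add: bk algebra_simps del: Tc.simps)
    also have "\<dots> = 0" by (simp only: rec) simp
    finally show ?thesis using less i j by simp
  next
    case greater
    obtain m where m: "l - i = Suc m" using i by (metis Suc_diff_Suc)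
    have li: "l - (i - 1) = Suc (Suc m)" "l - (i+1) = m" using m greater by auto
    define c where "c = ?T (j+1) / ?T (l+1)"
    have bk: "\<And>k. j \<le> k \<Longrightarrow> b k = ?T (l - k) * c" by (simp add: b_def c_def)
    have b1: "(if 0 < i then b (i-1) else 0) = ?T (Suc (Suc m)) * c" using greater li by (simp add: bk)
    have b2: "(if i+1 < l then b (i+1) else 0) = ?T m * c" using greater li m by (cases "i+1 < l") (auto simp: bk)
    have rec: "?T (Suc (Suc m)) = (2+e) * ?T (Suc m) - ?T m" by simp
    have "(2+e) * b i - (if 0 < i then b (i-1) else 0) - (if i+1 < l then b (i+1) else 0)
       = ((2+e) * ?T (Suc m) - ?T (Suc (Suc m)) - ?T m) * c"
      unfolding b1 b2 using greater m by (simp add: bk algebra_simps del: Tc.simps)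
    also have "\<dots> = 0" by (simp only: rec) simp
    finally show ?thesis using greater i j by simp
  next
    case equal
    obtain m where m: "l - i = Suc m" using i by (metis Suc_diff_Suc)
    have li: "l - (i+1) = m" using m by auto
    have add: "?T (l+1) = ?T (i+2) * ?T (Suc m) - ?T (i+1) * ?T m"
    proof -
      have lm: "l + 1 = (i+1) + m + 1" using m i by simp
      show ?thesis unfolding lm using Tc_add[of "2+e" "i+1" m] by (simp del: Tc.simps)
    qed
    define d where "d = 1 / ?T (l+1)"
    have b0: "b i = ?T (i+1) * ?T (Suc m) * d" using equal m by (simp add: b_def d_def)
    have b1: "(if 0 < i then b (i-1) else 0) = ?T i * ?T (Suc m) * d"
      using equal m by (cases i) (auto simp: b_def d_def)
    have b2: "(if i+1 < l then b (i+1) else 0) = ?T (i+1) * ?T m * d"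
      using equal m li by (cases "i+1 < l") (auto simp: b_def d_def)
    have "(2+e) * b i - (if 0 < i then b (i-1) else 0) - (if i+1 < l then b (i+1) else 0)
       = ((2+e) * ?T (i+1) * ?T (Suc m) - ?T i * ?T (Suc m) - ?T (i+1) * ?T m) * d"
      unfolding b0 b1 b2 by (simp add: algebra_simps del: Tc.simps)
    also have "\<dots> = 1"
    proof -
      have N: "(2+e) * ?T (i+1) * ?T (Suc m) - ?T i * ?T (Suc m) - ?T (i+1) * ?T m = ?T (l+1)"
        using add by (simp add: algebra_simps)
      have "?T (l+1) \<noteq> 0" using pos by linarith
      then show ?thesis by (simp only: N d_def) simp
    qed
    finally show ?thesis using equal i j by simp
  qed
  finally show "(Am e l * Bm e l) $$ (i,j) = 1\<^sub>m l $$ (i,j)" .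
qed

lemma Ginv_eq: assumes e: "0 \<le> e" shows "Ginv e l = Bm e l"
proof -
  have AB: "Am e l * Bm e l = 1\<^sub>m l" by (rule AB[OF e])
  have BA: "Bm e l * Am e l = 1\<^sub>m l"
    by (rule mat_mult_left_right_inverse[OF Am_carrier Bm_carrier AB])
  have U: "Am e l \<in> Units (ring_mat TYPE(real) l ())"
    using AB BA Am_carrier Bm_carrier unfolding Units_def by (auto simp: ring_mat_def)
  have "mat_inverse (Am e l) \<noteq> None"
  proof
    assume "mat_inverse (Am e l) = None"
    from mat_inverse(1)[OF Am_carrier this, where b="()"] U show False by blast
  qed
  then obtain C where C: "mat_inverse (Am e l) = Some C" by auto
  from mat_inverse(2)[OF Am_carrier C] have AC: "Am e l * C = 1\<^sub>m l" and Cc: "C \<in> carrier_mat l l" by auto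
  have "C = (Bm e l * Am e l) * C" using BA Cc by simp
  also have "\<dots> = Bm e l * (Am e l * C)" by (rule assoc_mult_mat[OF Bm_carrier Am_carrier Cc])
  also have "\<dots> = Bm e l" using AC Bm_carrier[of e l] by simp
  finally show ?thesis using C by (simp add: Ginv_def Am_def)
qed

lemma diag_mono: assumes e: "0 \<le> e" and k: "1 \<le> k" "k < l div 2"
  shows "Ginv e l $$ (k - 1, k - 1) < Ginv e l $$ (k, k)"
proof -
  let ?T = "Tc (2+e)"
  have kl: "k < l" "k - 1 < l" using k by auto
  have pos: "?T (l+1) > 0" using Tc_pos[of "2+e" "l+1"] e by simp
  define n where "n = l - 2*k"
  have n2: "n \<ge> 2" and ln: "l - k = n + k" "l - (k - 1) = n + k + 1" using k by (auto simp: n_def)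
  have np: "?T n > 0" using Tc_pos[of "2+e" n] e n2 by simp
  have ch: "?T (k+1) * ?T (n+k) - ?T k * ?T (n+k+1) = ?T n" by (rule Tc_cheb)
  have "Ginv e l $$ (k - 1, k - 1) = ?T k * ?T (n+k+1) / ?T (l+1)"
    using kl ln k by (simp add: Ginv_eq[OF e] Bm_def)
  moreover have "Ginv e l $$ (k, k) = ?T (k+1) * ?T (n+k) / ?T (l+1)"
    using kl ln by (simp add: Ginv_eq[OF e] Bm_def)
  ultimately show ?thesis using ch np pos by (simp add: divide_strict_right_mono)
qed



lemma pseq_step: "1 \<le> j \<Longrightarrow> pseq e (Suc j) = 2 + e - 1 / pseq e j"
  by (cases j) auto
lemma pseq'_step: "1 \<le> j \<Longrightarrow> pseq' e (Suc j) = 2 + e - 1 / pseq' e j"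
  by (cases j) auto

context fixes e :: real assumes e0: "0 \<le> e" and e1: "e < 1"
begin

definition "s = sqrt (e + e^2/4)"

lemma s_props: "s \<ge> 0" "s^2 = e + e^2/4" "s \<ge> sqrt e" "s < 1 + e/2" "s \<le> sqrt e + e/2"
proof -
  show "s \<ge> 0" "s^2 = e + e^2/4" using e0 by (auto simp: s_def)
  show "s \<ge> sqrt e" using e0 unfolding s_def by (intro real_sqrt_le_mono) simp
  have "s < sqrt ((1 + e/2)^2)" unfolding s_def using e0 by (intro real_sqrt_less_mono) (simp add: power2_eq_square algebra_simps)
  then show "s < 1 + e/2" using e0 by simp
  have "s \<le> sqrt ((sqrt e + e/2)^2)" unfolding s_def using e0
    by (intro real_sqrt_le_mono) (simp add: power2_eq_square algebra_simps mult_nonneg_nonneg)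
  then show "s \<le> sqrt e + e/2" using e0 by simp
qed

lemma s_half: "s \<ge> e/2"
proof -
  have "sqrt ((e/2)^2) \<le> s" unfolding s_def by (intro real_sqrt_le_mono) (simp add: power2_eq_square e0)
  then show ?thesis using e0 by simp
qed

lemma P_def': "pplus e = 1 + e/2 + s" by (simp add: pplus_def s_def)

lemma P_fix: "2 + e - 1 / pplus e = pplus e"
proof -
  have pos: "pplus e > 0" using s_props e0 by (simp add: P_def')
  have "pplus e ^2 - (2+e) * pplus e + 1 = 0" using s_props(2) unfolding P_def'
    by (simp add: power2_eq_square algebra_simps)
  then show ?thesis using pos by (simp add: field_simps power2_eq_square)
qed

lemma P_ge: "pplus e \<ge> 1 + sqrt e" using s_props e0 by (simp add: P_def')
lemma P_lt: "pplus e < 2 + e" using s_props by (simp add: P_def')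
lemma P_ge1: "pplus e \<ge> 1" using P_ge by (smt (verit) real_sqrt_ge_zero e0)

lemma p_facts: "1 \<le> j \<Longrightarrow> pplus e < pseq e j \<and> pseq e (Suc j) < pseq e j \<and> pseq e j \<le> 1 + 1 / real j + real j * e"
proof (induction j rule: dec_induct)
  case base
  have "pseq e 2 = 2 + e - 1/(2+e)" by (simp add: numeral_2_eq_2)
  moreover have "1/(2+e) > 0" using e0 by simp
  ultimately show ?case using P_lt by (simp add: numeral_2_eq_2)
next
  case (step j)
  let ?p = "pseq e j" and ?q = "pseq e (Suc j)"
  have qs: "?q = 2 + e - 1/?p" using step pseq_step by auto
  have q2: "pseq e (Suc (Suc j)) = 2 + e - 1/?q" using pseq_step[of "Suc j"] by simp
  have P0: "pplus e > 0" using P_ge1 by simp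
  have a: "pplus e < ?q"
  proof -
    have "1/?p < 1/pplus e" using step P0 by (intro divide_strict_left_mono) auto
    then show ?thesis using qs P_fix by linarith
  qed
  have b: "pseq e (Suc (Suc j)) < ?q"
  proof -
    have "1/?p < 1/?q" using step a P0 by (intro divide_strict_left_mono) auto
    then show ?thesis using qs q2 by linarith
  qed
  have c: "?q \<le> 1 + 1 / real (Suc j) + real (Suc j) * e"
  proof -
    define x where "x = 1 + 1 / real j + real j * e"
    have j1: "real j \<ge> 1" using step by simp
    have xp: "x > 0" using j1 e0 by (simp add: x_def add_pos_nonneg)
    have "1 / x \<le> 1/ ?p" using step P0 xp by (intro divide_left_mono) (auto simp: x_def)
    then have "?q \<le> 2 + e - 1/x" using qs by linarith
    also have "\<dots> \<le> 1 + 1 / real (Suc j) + real (Suc j) * e"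
    proof -
      have "1 - 1/x = (1/real j + real j * e) / x" using xp by (simp add: x_def field_simps)
      also have "\<dots> \<le> (1/real j + real j * e) / (1 + 1/real j)"
      proof (rule divide_left_mono)
        show "0 \<le> 1/real j + real j * e" using j1 e0 by simp
        show "1 + 1/real j \<le> x" using j1 e0 by (simp add: x_def)
        have "0 < 1 + 1/real j" using j1 by (simp add: add_pos_pos)
        then show "0 < x * (1 + 1/real j)" using xp by simp
      qed
      also have "\<dots> = (1 + real j ^2 * e) / (real j + 1)"
      proof -
        have "1/real j + real j * e = (1 + real j ^2 * e) / real j" "1 + 1/real j = (real j + 1) / real j"
          using j1 by (simp_all add: field_simps power2_eq_square)
        then show ?thesis using j1 by simp
      qed
      also have "\<dots> \<le> 1 / (real j + 1) + real j * e"
      proof -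
        have "real j ^2 * e / (real j + 1) \<le> real j * e"
          using j1 e0 by (simp add: field_simps power2_eq_square mult_left_mono)
        then show ?thesis by (simp add: add_divide_distrib)
      qed
      finally show ?thesis by (simp add: algebra_simps)
    qed
    finally show ?thesis .
  qed
  show ?case using a b c by simp
qed

lemma p'_facts: "1 \<le> j \<Longrightarrow> 1 \<le> pseq' e j \<and> pseq' e j \<le> pplus e \<and> pseq' e j \<le> pseq' e (Suc j)"
proof (induction j rule: dec_induct)
  case base
  have "pseq' e 2 = 2 + e - 1/(1+e)" by (simp add: numeral_2_eq_2)
  moreover have "1/(1+e) \<le> 1" using e0 by simp
  moreover have "1 + e \<le> pplus e" using s_half by (simp add: P_def')
  ultimately show ?case using e0 by (simp add: numeral_2_eq_2)
next
  case (step j)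
  let ?p = "pseq' e j" and ?q = "pseq' e (Suc j)"
  have qs: "?q = 2 + e - 1/?p" using step pseq'_step by auto
  have q2: "pseq' e (Suc (Suc j)) = 2 + e - 1/?q" using pseq'_step[of "Suc j"] by simp
  have P0: "pplus e > 0" using P_ge1 by simp
  have a: "?q \<le> pplus e"
  proof -
    have "1/pplus e \<le> 1/?p" using step P0 by (intro divide_left_mono) auto
    then show ?thesis using qs P_fix by linarith
  qed
  have b: "1 \<le> ?q"
  proof -
    have "1/?p \<le> 1" using step by simp
    then show ?thesis using qs e0 by linarith
  qed
  have c: "?q \<le> pseq' e (Suc (Suc j))"
  proof -
    have "1/?q \<le> 1/?p" using step by (intro divide_left_mono) auto
    then show ?thesis using qs q2 by linarith
  qed
  show ?case using a b c by simp
qed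

lemma p_rate: "pseq e (n+2) - pplus e \<le> 1 / (1 + sqrt e) ^ n"
proof (induction n)
  case 0
  have "pseq e 2 = 2 + e - 1/(2+e)" by (simp add: numeral_2_eq_2)
  then have "pseq e 2 - pplus e = 1/pplus e - 1/(2+e)" using P_fix by linarith
  also have "\<dots> \<le> 1"
  proof -
    have "1/pplus e \<le> 1" using P_ge1 by simp
    moreover have "1/(2+e) \<ge> 0" using e0 by simp
    ultimately show ?thesis by linarith
  qed
  finally show ?case by (simp del: pseq.simps add: numeral_2_eq_2)
next
  case (Suc n)
  let ?p = "pseq e (n+2)"
  have P0: "pplus e > 0" using P_ge1 by simp
  have pp: "pplus e < ?p" using p_facts[of "n+2"] by simp
  have q: "pseq e (Suc n + 2) = 2 + e - 1/?p" using pseq_step[of "n+2" e] by simp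
  have sq: "sqrt e \<ge> 0" using e0 by simp
  have "pseq e (Suc n + 2) - pplus e = 1/pplus e - 1/?p" using q P_fix by linarith
  also have "\<dots> = (?p - pplus e) / (pplus e * ?p)" using P0 pp by (simp add: field_simps)
  also have "\<dots> \<le> (?p - pplus e) / (1 + sqrt e)"
  proof (rule divide_left_mono)
    show "0 \<le> ?p - pplus e" using pp by simp
    have "1 + sqrt e \<le> pplus e * 1" using P_ge by simp
    also have "\<dots> \<le> pplus e * ?p" using P0 pp P_ge1 by (intro mult_left_mono) auto
    finally show "1 + sqrt e \<le> pplus e * ?p" .
    show "0 < pplus e * ?p * (1 + sqrt e)" using P0 pp sq by (simp add: add_pos_nonneg)
  qed
  also have "\<dots> \<le> (1 / (1 + sqrt e) ^ n) / (1 + sqrt e)"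
    using Suc sq e0 by (intro divide_right_mono) auto
  also have "\<dots> = 1 / (1 + sqrt e) ^ Suc n" by simp
  finally show ?case .
qed

lemma p'_rate: "pplus e - pseq' e (Suc n) \<le> sqrt e / (1 + sqrt e) ^ n"
proof (induction n)
  case 0
  show ?case using s_props by (simp add: P_def')
next
  case (Suc n)
  let ?p = "pseq' e (Suc n)"
  have P0: "pplus e > 0" using P_ge1 by simp
  have pf: "1 \<le> ?p" "?p \<le> pplus e" using p'_facts[of "Suc n"] by auto
  have q: "pseq' e (Suc (Suc n)) = 2 + e - 1/?p" using pseq'_step[of "Suc n" e] by simp
  have sq: "sqrt e \<ge> 0" using e0 by simp
  have "pplus e - pseq' e (Suc (Suc n)) = 1/?p - 1/pplus e" using q P_fix by linarith
  also have "\<dots> = (pplus e - ?p) / (pplus e * ?p)" using P0 pf by (simp add: field_simps)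
  also have "\<dots> \<le> (pplus e - ?p) / (1 + sqrt e)"
  proof (rule divide_left_mono)
    show "0 \<le> pplus e - ?p" using pf by simp
    have "1 + sqrt e \<le> pplus e * 1" using P_ge by simp
    also have "\<dots> \<le> pplus e * ?p" using P0 pf by (intro mult_left_mono) auto
    finally show "1 + sqrt e \<le> pplus e * ?p" .
    show "0 < pplus e * ?p * (1 + sqrt e)" using P0 pf sq by (simp add: add_pos_nonneg)
  qed
  also have "\<dots> \<le> (sqrt e / (1 + sqrt e) ^ n) / (1 + sqrt e)"
    using Suc sq e0 by (intro divide_right_mono) auto
  also have "\<dots> = sqrt e / (1 + sqrt e) ^ Suc n" by simp
  finally show ?case .
qed

lemma p'_rate2: assumes "2 \<le> j" shows "pplus e - pseq' e j \<le> sqrt e / (1 + sqrt e) ^ (j - 2)"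
proof -
  obtain n where n: "j = Suc (Suc n)" using assms by (metis add_2_eq_Suc le_Suc_ex)
  have "pplus e - pseq' e j \<le> sqrt e / (1 + sqrt e) ^ Suc n" using p'_rate[of "Suc n"] n by simp
  also have "\<dots> \<le> sqrt e / (1 + sqrt e) ^ n"
    using e0 by (intro divide_left_mono power_increasing) (auto simp: add_pos_nonneg)
  finally show ?thesis using n by simp
qed

end



lemma pseq_T: assumes e: "0 \<le> e" shows "1 \<le> j \<Longrightarrow> pseq e j = Tc (2+e) (j+1) / Tc (2+e) j"
proof (induction j rule: dec_induct)
  case base then show ?case by simp
next
  case (step j)
  have p: "Tc (2+e) (j+1) > 0" "Tc (2+e) j > 0" using Tc_pos[of "2+e"] e step by auto
  have "pseq e (Suc j) = 2 + e - Tc (2+e) j / Tc (2+e) (j+1)" using pseq_step[of j e] step by simp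
  also have "\<dots> = Tc (2+e) (Suc j + 1) / Tc (2+e) (Suc j)" using p by (simp add: field_simps)
  finally show ?case .
qed

lemma pseq'_T: assumes e: "0 \<le> e" shows "1 \<le> j \<Longrightarrow> pseq' e j = (Tc (2+e) (j+1) - Tc (2+e) j) / (Tc (2+e) j - Tc (2+e) (j-1))"
proof (induction j rule: dec_induct)
  case base then show ?case by simp
next
  case (step j)
  obtain m where m: "j = Suc m" using step by (cases j) auto
  have g1: "Tc (2+e) (Suc (Suc m)) - Tc (2+e) (Suc m) \<ge> 1" "Tc (2+e) (Suc m) - Tc (2+e) m \<ge> 1"
    using Tc_grow[of "2+e" "Suc m"] Tc_grow[of "2+e" m] e by (simp_all del: Tc.simps)
  have "pseq' e (Suc j) = 2 + e - (Tc (2+e) (Suc m) - Tc (2+e) m) / (Tc (2+e) (Suc (Suc m)) - Tc (2+e) (Suc m))"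
    using pseq'_step[of j e] step m by simp
  also have "\<dots> = (Tc (2+e) (Suc (Suc (Suc m))) - Tc (2+e) (Suc (Suc m))) / (Tc (2+e) (Suc (Suc m)) - Tc (2+e) (Suc m))"
    using g1 by (simp add: field_simps)
  finally show ?case using m by simp
qed

lemma prod_p: assumes e: "0 \<le> e" shows "(\<Prod>j=1..n. pseq e j) = Tc (2+e) (n+1)"
proof (induction n)
  case 0 then show ?case by simp
next
  case (Suc n)
  have p: "Tc (2+e) (n+1) > 0" using Tc_pos[of "2+e"] e by auto
  have "(\<Prod>j=1..Suc n. pseq e j) = (\<Prod>j=1..n. pseq e j) * pseq e (Suc n)" by (simp add: prod.cl_ivl_Suc)
  also have "\<dots> = Tc (2+e) (n+1) * (Tc (2+e) (Suc n + 1) / Tc (2+e) (Suc n))"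
    using Suc pseq_T[OF e, of "Suc n"] by simp
  also have "\<dots> = Tc (2+e) (Suc n + 1)" using p by simp
  finally show ?case .
qed

lemma prod_p': assumes e: "0 \<le> e" shows "(\<Prod>j=1..n. pseq' e j) = Tc (2+e) (n+1) - Tc (2+e) n"
proof (induction n)
  case 0 then show ?case by simp
next
  case (Suc n)
  have p: "Tc (2+e) (n+1) - Tc (2+e) n \<ge> 1" using Tc_grow[of "2+e"] e by auto
  have "(\<Prod>j=1..Suc n. pseq' e j) = (\<Prod>j=1..n. pseq' e j) * pseq' e (Suc n)" by (simp add: prod.cl_ivl_Suc)
  also have "\<dots> = (Tc (2+e) (n+1) - Tc (2+e) n) * ((Tc (2+e) (Suc n + 1) - Tc (2+e) (Suc n)) / (Tc (2+e) (Suc n) - Tc (2+e) n))"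
    using Suc pseq'_T[OF e, of "Suc n"] by simp
  also have "\<dots> = Tc (2+e) (Suc n + 1) - Tc (2+e) (Suc n)" using p by simp
  finally show ?case .
qed

lemma part4: assumes e: "0 \<le> e" and k: "2 \<le> k"
  shows "(\<Prod>j=1..k. pseq' e j) = (pseq e k - 1) * (\<Prod>j=1..k-1. pseq e j)"
proof -
  have p: "Tc (2+e) k > 0" using Tc_pos[of "2+e" k] e k by auto
  have "(pseq e k - 1) * (\<Prod>j=1..k-1. pseq e j) = (Tc (2+e) (k+1) / Tc (2+e) k - 1) * Tc (2+e) k"
    using pseq_T[OF e, of k] prod_p[OF e, of "k-1"] k by simp
  also have "\<dots> = Tc (2+e) (k+1) - Tc (2+e) k" using p by (simp add: field_simps)
  finally show ?thesis using prod_p'[OF e, of k] by simp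
qed


theorem lemma1:
  fixes e :: real
  assumes "0 \<le> e" and "e < 1"
  shows
    "(\<forall>j\<ge>1. 1 \<le> pseq' e j \<and> pseq' e j \<le> pplus e \<and> pplus e < pseq e j
             \<and> pseq e j \<le> 1 + 1 / real j + real j * e)
     \<and> (\<forall>j\<ge>1. pseq e (j + 1) < pseq e j)
     \<and> (\<forall>j\<ge>1. pseq' e j \<le> pseq' e (j + 1))
     \<and> (\<forall>l k. 1 \<le> k \<and> k < l div 2 \<longrightarrow>
             Ginv e l $$ (k - 1, k - 1) < Ginv e l $$ (k, k))
     \<and> (\<forall>j\<ge>2. pseq e j - pplus e \<le> 1 / (1 + sqrt e) ^ (j - 2)
             \<and> pplus e - pseq' e j \<le> sqrt e / (1 + sqrt e) ^ (j - 2))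
     \<and> (\<forall>k\<ge>2. (\<Prod>j=1..k. pseq' e j) = (pseq e k - 1) * (\<Prod>j=1..k-1. pseq e j))"
proof (intro conjI allI impI)
  fix j :: nat assume j: "1 \<le> j"
  note P = p_facts[OF assms j] and Q = p'_facts[OF assms j]
  show "1 \<le> pseq' e j" "pseq' e j \<le> pplus e" "pplus e < pseq e j"
    "pseq e j \<le> 1 + 1 / real j + real j * e" "pseq e (j + 1) < pseq e j"
    "pseq' e j \<le> pseq' e (j + 1)" using P Q by auto
next
  fix l k :: nat assume "1 \<le> k \<and> k < l div 2"
  then show "Ginv e l $$ (k - 1, k - 1) < Ginv e l $$ (k, k)" using diag_mono[OF assms(1)] by auto
next
  fix j :: nat assume j: "2 \<le> j"
  then obtain n where n: "j = n + 2" by (metis add.commute le_Suc_ex)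
  show "pseq e j - pplus e \<le> 1 / (1 + sqrt e) ^ (j - 2)" using p_rate[OF assms, of n] n by simp
  show "pplus e - pseq' e j \<le> sqrt e / (1 + sqrt e) ^ (j - 2)" by (rule p'_rate2[OF assms j])
next
  fix k :: nat assume "2 \<le> k"
  then show "(\<Prod>j=1..k. pseq' e j) = (pseq e k - 1) * (\<Prod>j=1..k-1. pseq e j)"
    by (rule part4[OF assms(1)])
qed

end
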